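(* Let $(\mathcal X,\mathcal A,\mu)$ be a measurable space with $\sigma$-finite $\mu$, let $p_1,p_2$ be mutually absolutely continuous probability densities w.r.t. $\mu$, $B=p_1/p_2$, $\rho=\int\sqrt{p_1p_2}\,d\mu$. Let $X_1$ have density $p_1$ and $X_2$ have density $p_2$, independent, and define $\Delta_t=B(X_2)^t-B(X_1)^{t-1}$. Then $\mathrm{Var}(\Delta_{1/2})=2(1-\rho^2)<\infty$, whereas for every $t\neq 1/2$, $$\sup_{(p_1,p_2)\in\mathcal P_{\mathrm{ac}}}\mathrm{Var}(\Delta_t)=+\infty.$$
   Context: Mutual absolute continuity: $p_1(x)=0\iff p_2(x)=0$ for $\mu$-a.e. $x$. $\mathcal P_{\mathrm{ac}}$ denotes the class of all pairs of mutually absolutely continuous probability densities. Variances take values in $[0,\infty]$, equal to $+\infty$ when the second moment is infinite. *)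

theory Defs
  imports "HOL-Probability.Probability"
begin

definition is_prob_density :: "'a measure \<Rightarrow> ('a \<Rightarrow> real) \<Rightarrow> bool" where
  "is_prob_density M p \<longleftrightarrow> p \<in> borel_measurable M \<and> (\<forall>x\<in>space M. 0 \<le> p x)
      \<and> (\<integral>\<^sup>+ x. ennreal (p x) \<partial>M) = 1"

definition Pac :: "'a measure \<Rightarrow> (('a \<Rightarrow> real) \<times> ('a \<Rightarrow> real)) set" where
  "Pac M = {(p1, p2). is_prob_density M p1 \<and> is_prob_density M p2
              \<and> (AE x in M. p1 x = 0 \<longleftrightarrow> p2 x = 0)}"

definition evar :: "'a measure \<Rightarrow> ('a \<Rightarrow> real) \<Rightarrow> ennreal" where
  "evar P Y = (if integrable P (\<lambda>x. (Y x)\<^sup>2)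
               then ennreal (\<integral> x. (Y x - (\<integral> y. Y y \<partial>P))\<^sup>2 \<partial>P)
               else \<infinity>)"

definition lratio :: "('a \<Rightarrow> real) \<Rightarrow> ('a \<Rightarrow> real) \<Rightarrow> 'a \<Rightarrow> real" where
  "lratio p1 p2 x = p1 x / p2 x"

text \<open>Var(Delta_t) where Delta_t = B(X2)^t - B(X1)^(t-1), X1 ~ p1, X2 ~ p2 independent:
  the joint law of (X1,X2) is the product of the two density measures.\<close>
definition Delta_var :: "'a measure \<Rightarrow> ('a \<Rightarrow> real) \<Rightarrow> ('a \<Rightarrow> real) \<Rightarrow> real \<Rightarrow> ennreal" where
  "Delta_var M p1 p2 t =
     evar (density M (\<lambda>x. ennreal (p1 x)) \<Otimes>\<^sub>M density M (\<lambda>x. ennreal (p2 x)))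
          (\<lambda>(x1, x2). lratio p1 p2 x2 powr t - lratio p1 p2 x1 powr (t - 1))"

end

theory Submission
  imports Defs
begin



lemma distr_pair_snd':
  assumes "prob_space M" "sigma_finite_measure N"
  shows "distr (M \<Otimes>\<^sub>M N) N snd = N"
proof (intro measure_eqI)
  interpret prob_space M by fact
  interpret N: sigma_finite_measure N by fact
  interpret pair_sigma_finite M N ..
  fix A assume A: "A \<in> sets (distr (M \<Otimes>\<^sub>M N) N snd)"
  from A have "emeasure (distr (M \<Otimes>\<^sub>M N) N snd) A = emeasure (M \<Otimes>\<^sub>M N) (space M \<times> A)"
    by (auto simp add: emeasure_distr space_pair_measure dest: sets.sets_into_space intro!: arg_cong2[where f=emeasure])
  with A show "emeasure (distr (M \<Otimes>\<^sub>M N) N snd) A = emeasure N A"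
    by (simp add: N.emeasure_pair_measure_Times emeasure_space_1)
qed simp

lemma abs_mult_le_sq: "\<bar>(a::real) * b\<bar> \<le> b\<^sup>2 + a\<^sup>2"
proof -
  have "0 \<le> (\<bar>a\<bar> - \<bar>b\<bar>)\<^sup>2" by simp
  then have "2 * (\<bar>a\<bar> * \<bar>b\<bar>) \<le> a\<^sup>2 + b\<^sup>2" by (simp add: power2_eq_square algebra_simps)
  moreover have "0 \<le> \<bar>a\<bar> * \<bar>b\<bar>" by simp
  moreover have "\<bar>a * b\<bar> = \<bar>a\<bar> * \<bar>b\<bar>" by (simp add: abs_mult)
  ultimately show ?thesis by linarith
qed

lemma var_split:
  fixes f g :: "'a \<Rightarrow> real"
  assumes Q1: "prob_space Q1" and Q2: "prob_space Q2"
    and fm[measurable]: "f \<in> borel_measurable Q2" and gm[measurable]: "g \<in> borel_measurable Q1"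
    and f2: "integrable Q2 (\<lambda>x. (f x)\<^sup>2)" and g2: "integrable Q1 (\<lambda>x. (g x)\<^sup>2)"
  shows "evar (Q1 \<Otimes>\<^sub>M Q2) (\<lambda>(x1, x2). f x2 - g x1) =
     ennreal (((\<integral>x. (f x)\<^sup>2 \<partial>Q2) - (\<integral>x. f x \<partial>Q2)\<^sup>2) + ((\<integral>x. (g x)\<^sup>2 \<partial>Q1) - (\<integral>x. g x \<partial>Q1)\<^sup>2))"
proof -
  interpret Q1: prob_space Q1 by fact
  interpret Q2: prob_space Q2 by fact
  interpret P: pair_prob_space Q1 Q2 ..
  let ?P = "Q1 \<Otimes>\<^sub>M Q2"
  have d1: "distr ?P Q1 fst = Q1" by (rule Q2.distr_pair_fst)
  have d2: "distr ?P Q2 snd = Q2" by (rule distr_pair_snd') (simp_all add: Q1.prob_space_axioms Q2.sigma_finite_measure_axioms)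
  have f1: "integrable Q2 f" by (rule Q2.square_integrable_imp_integrable[OF fm f2])
  have g1: "integrable Q1 g" by (rule Q1.square_integrable_imp_integrable[OF gm g2])
  have iF2: "integrable ?P (\<lambda>z. (f (snd z))\<^sup>2)"
    using f2 d2 integrable_distr_eq[of snd ?P Q2 "\<lambda>x. (f x)\<^sup>2"] by simp
  have iG2: "integrable ?P (\<lambda>z. (g (fst z))\<^sup>2)"
    using g2 d1 integrable_distr_eq[of fst ?P Q1 "\<lambda>x. (g x)\<^sup>2"] by simp
  have iF: "integrable ?P (\<lambda>z. f (snd z))"
    using f1 d2 integrable_distr_eq[of snd ?P Q2 "\<lambda>x. f x"] by simp
  have iG: "integrable ?P (\<lambda>z. g (fst z))"
    using g1 d1 integrable_distr_eq[of fst ?P Q1 "\<lambda>x. g x"] by simp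
  have eF2: "(\<integral>z. (f (snd z))\<^sup>2 \<partial>?P) = (\<integral>x. (f x)\<^sup>2 \<partial>Q2)"
    using d2 integral_distr[of snd ?P Q2 "\<lambda>x. (f x)\<^sup>2"] by simp
  have eG2: "(\<integral>z. (g (fst z))\<^sup>2 \<partial>?P) = (\<integral>x. (g x)\<^sup>2 \<partial>Q1)"
    using d1 integral_distr[of fst ?P Q1 "\<lambda>x. (g x)\<^sup>2"] by simp
  have eF: "(\<integral>z. f (snd z) \<partial>?P) = (\<integral>x. f x \<partial>Q2)"
    using d2 integral_distr[of snd ?P Q2 "\<lambda>x. f x"] by simp
  have eG: "(\<integral>z. g (fst z) \<partial>?P) = (\<integral>x. g x \<partial>Q1)"
    using d1 integral_distr[of fst ?P Q1 "\<lambda>x. g x"] by simp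
  have iFG: "integrable ?P (\<lambda>z. g (fst z) * f (snd z))"
  proof (rule Bochner_Integration.integrable_bound[OF Bochner_Integration.integrable_add[OF iF2 iG2]])
    show "AE z in ?P. norm (g (fst z) * f (snd z)) \<le> norm ((f (snd z))\<^sup>2 + (g (fst z))\<^sup>2)"
    proof (intro AE_I2)
      fix z
      have "\<bar>g (fst z) * f (snd z)\<bar> \<le> (f (snd z))\<^sup>2 + (g (fst z))\<^sup>2"
        by (rule abs_mult_le_sq)
      then show "norm (g (fst z) * f (snd z)) \<le> norm ((f (snd z))\<^sup>2 + (g (fst z))\<^sup>2)" by simp
    qed
  qed measurable
  have eFG: "(\<integral>z. g (fst z) * f (snd z) \<partial>?P) = (\<integral>x. g x \<partial>Q1) * (\<integral>x. f x \<partial>Q2)"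
  proof -
    have ceq: "(\<lambda>(x, y). g x * f y) = (\<lambda>z. g (fst z) * f (snd z))" by (auto simp: fun_eq_iff)
    have i': "integrable ?P (\<lambda>(x, y). g x * f y)" using iFG by (simp only: ceq)
    have "(\<integral>z. g (fst z) * f (snd z) \<partial>?P) = (\<integral>x. (\<integral>y. g x * f y \<partial>Q2) \<partial>Q1)"
      using P.integral_fst[OF i'] unfolding ceq by simp
    also have "\<dots> = (\<integral>x. g x * (\<integral>y. f y \<partial>Q2) \<partial>Q1)" by simp
    also have "\<dots> = (\<integral>x. g x \<partial>Q1) * (\<integral>x. f x \<partial>Q2)" by simp
    finally show ?thesis .
  qed
  define Y where "Y = (\<lambda>(x1, x2). f x2 - g x1)"
  have Yeq: "Y = (\<lambda>z. f (snd z) - g (fst z))" by (auto simp: Y_def)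
  have Y2: "(\<lambda>z. (Y z)\<^sup>2) = (\<lambda>z. (f (snd z))\<^sup>2 + (g (fst z))\<^sup>2 - 2 * (g (fst z) * f (snd z)))"
    by (auto simp: Yeq power2_eq_square algebra_simps)
  have iY2: "integrable ?P (\<lambda>z. (Y z)\<^sup>2)"
    unfolding Y2 using iF2 iG2 iFG by (intro Bochner_Integration.integrable_diff Bochner_Integration.integrable_add Bochner_Integration.integrable_mult_right) auto
  have iY: "integrable ?P Y" unfolding Yeq using iF iG by auto
  have eY: "(\<integral>z. Y z \<partial>?P) = (\<integral>x. f x \<partial>Q2) - (\<integral>x. g x \<partial>Q1)"
    unfolding Yeq using iF iG eF eG by simp
  have eY2: "(\<integral>z. (Y z)\<^sup>2 \<partial>?P) = (\<integral>x. (f x)\<^sup>2 \<partial>Q2) + (\<integral>x. (g x)\<^sup>2 \<partial>Q1) - 2 * ((\<integral>x. g x \<partial>Q1) * (\<integral>x. f x \<partial>Q2))"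
    unfolding Y2 using iF2 iG2 iFG eF2 eG2 eFG by simp
  have "(\<integral>z. (Y z - (\<integral>y. Y y \<partial>?P))\<^sup>2 \<partial>?P) = (\<integral>z. (Y z)\<^sup>2 \<partial>?P) - (\<integral>z. Y z \<partial>?P)\<^sup>2"
    using P.variance_eq[OF iY iY2] by simp
  also have "\<dots> = ((\<integral>x. (f x)\<^sup>2 \<partial>Q2) - (\<integral>x. f x \<partial>Q2)\<^sup>2) + ((\<integral>x. (g x)\<^sup>2 \<partial>Q1) - (\<integral>x. g x \<partial>Q1)\<^sup>2)"
    unfolding eY eY2 by (simp add: power2_eq_square algebra_simps)
  finally show ?thesis
    unfolding evar_def Y_def[symmetric] using iY2 by simp
qed


lemma powr_mhalf: assumes "0 < (b::real)" shows "b powr (1/2 - 1) = 1 / sqrt b"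
proof -
  have e: "(1/2 - 1::real) = - (1/2)" by simp
  have "b powr (1/2 - 1) = inverse (b powr (1/2))" unfolding e by (rule powr_minus)
  also have "b powr (1/2) = sqrt b" using assms by (intro powr_half_sqrt) simp
  finally show ?thesis by (simp add: inverse_eq_divide)
qed

lemma L1: assumes "0 \<le> (a::real)" "0 \<le> c" shows "c * (a/c) powr (1/2) = sqrt (a*c)"
proof (cases "c = 0")
  case False
  then have "c > 0" using assms by simp
  have "(a/c) powr (1/2) = sqrt (a/c)" using assms by (intro powr_half_sqrt) simp
  moreover have "c = sqrt (c\<^sup>2)" using assms by simp
  ultimately have "c * (a/c) powr (1/2) = sqrt (c\<^sup>2) * sqrt (a/c)" by simp
  also have "\<dots> = sqrt (c\<^sup>2 * (a/c))" by (simp only: real_sqrt_mult)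
  also have "c\<^sup>2 * (a/c) = a * c" using \<open>c>0\<close> by (simp add: power2_eq_square)
  finally show ?thesis .
qed simp
lemma L2: assumes "0 \<le> (a::real)" "0 \<le> c" shows "c * ((a/c) powr (1/2))\<^sup>2 = (if c = 0 then 0 else a)"
  using assms by (simp add: powr_half_sqrt)


lemma L3: assumes "0 \<le> (a::real)" "0 \<le> c" shows "a * (a/c) powr (1/2 - 1) = sqrt (a*c)"
proof (cases "a = 0 \<or> c = 0")
  case False
  then have "a > 0" "c > 0" using assms by auto
  have h: "(a/c) powr (1/2 - 1) = 1 / sqrt (a/c)" using \<open>a>0\<close> \<open>c>0\<close> by (intro powr_mhalf) simp
  have "a * (a/c) powr (1/2 - 1) = a / sqrt (a/c)" by (simp only: h) simp
  also have "sqrt (a/c) = sqrt a / sqrt c" by (rule real_sqrt_divide)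
  also have "a / (sqrt a / sqrt c) = sqrt a * sqrt c"
  proof -
    have s: "sqrt a * sqrt a = a" using \<open>a>0\<close> by simp
    have "a / (sqrt a / sqrt c) = a * sqrt c / sqrt a" by simp
    also have "a * sqrt c = sqrt a * (sqrt a * sqrt c)" by (metis s mult.assoc)
    also have "sqrt a * (sqrt a * sqrt c) / sqrt a = sqrt a * sqrt c"
      by (rule nonzero_mult_div_cancel_left) (use \<open>a>0\<close> in simp)
    finally show ?thesis .
  qed
  also have "\<dots> = sqrt (a*c)" by (simp add: real_sqrt_mult)
  finally show ?thesis .
qed auto

lemma L4: assumes "0 \<le> (a::real)" "0 \<le> c" shows "a * ((a/c) powr (1/2 - 1))\<^sup>2 = (if a = 0 \<or> c = 0 then 0 else c)"
proof (cases "a = 0 \<or> c = 0")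
  case False
  then have "a > 0" "c > 0" using assms by auto
  have h: "(a/c) powr (1/2 - 1) = 1 / sqrt (a/c)" using \<open>a>0\<close> \<open>c>0\<close> by (intro powr_mhalf) simp
  have "((a/c) powr (1/2 - 1))\<^sup>2 = (1 / sqrt (a/c))\<^sup>2" by (simp only: h)
  also have "\<dots> = 1 / (a/c)" using \<open>a>0\<close> \<open>c>0\<close> by (simp add: power_divide)
  finally show ?thesis using \<open>a>0\<close> \<open>c>0\<close> by simp
qed auto

lemma dens_prob:
  assumes "is_prob_density M p"
  shows "prob_space (density M (\<lambda>x. ennreal (p x)))"
proof (rule prob_spaceI)
  have "emeasure (density M (\<lambda>x. ennreal (p x))) (space M) = (\<integral>\<^sup>+ x. ennreal (p x) * indicator (space M) x \<partial>M)"
    using assms by (intro emeasure_density) (auto simp: is_prob_density_def)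
  also have "\<dots> = (\<integral>\<^sup>+ x. ennreal (p x) \<partial>M)"
    by (intro nn_integral_cong) auto
  finally show "emeasure (density M (\<lambda>x. ennreal (p x))) (space (density M (\<lambda>x. ennreal (p x)))) = 1"
    using assms by (simp add: is_prob_density_def)
qed

lemma dens_int:
  assumes "is_prob_density M p"
  shows "integrable M p" "(\<integral>x. p x \<partial>M) = 1"
proof -
  have m: "p \<in> borel_measurable M" and nn: "AE x in M. 0 \<le> p x" and one: "(\<integral>\<^sup>+ x. ennreal (p x) \<partial>M) = 1"
    using assms by (auto simp: is_prob_density_def)
  show "integrable M p" by (rule integrableI_nonneg[OF m nn]) (simp add: one)
  show "(\<integral>x. p x \<partial>M) = 1" by (simp add: integral_eq_nn_integral[OF m nn] one)
qed

lemma part1: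
  assumes pac: "(p1, p2) \<in> Pac M"
  shows "Delta_var M p1 p2 (1/2) = ennreal (2 * (1 - (\<integral> x. sqrt (p1 x * p2 x) \<partial>M)\<^sup>2))"
proof -
  have d1: "is_prob_density M p1" and d2: "is_prob_density M p2"
    and ae: "AE x in M. p1 x = 0 \<longleftrightarrow> p2 x = 0" using pac by (auto simp: Pac_def)
  have [measurable]: "p1 \<in> borel_measurable M" "p2 \<in> borel_measurable M"
    using d1 d2 by (auto simp: is_prob_density_def)
  have nn1: "\<And>x. x \<in> space M \<Longrightarrow> 0 \<le> p1 x" and nn2: "\<And>x. x \<in> space M \<Longrightarrow> 0 \<le> p2 x"
    using d1 d2 by (auto simp: is_prob_density_def)
  let ?P1 = "density M (\<lambda>x. ennreal (p1 x))" and ?P2 = "density M (\<lambda>x. ennreal (p2 x))"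
  define f where "f = (\<lambda>x. lratio p1 p2 x powr (1/2))"
  define g where "g = (\<lambda>x. lratio p1 p2 x powr (1/2 - 1))"
  have fm[measurable]: "f \<in> borel_measurable M" unfolding f_def lratio_def by measurable
  have gm[measurable]: "g \<in> borel_measurable M" unfolding g_def lratio_def by measurable
  have fm': "f \<in> borel_measurable ?P2" by simp
  have gm': "g \<in> borel_measurable ?P1" by simp
  have aeM1: "AE x in M. 0 \<le> p1 x" and aeM2: "AE x in M. 0 \<le> p2 x" using nn1 nn2 by auto
  have i1: "integrable M p1" "(\<integral>x. p1 x \<partial>M) = 1" using dens_int[OF d1] by auto
  have i2: "integrable M p2" "(\<integral>x. p2 x \<partial>M) = 1" using dens_int[OF d2] by auto
  have pf: "\<And>x. x \<in> space M \<Longrightarrow> p2 x * f x = sqrt (p1 x * p2 x)"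
    unfolding f_def lratio_def using nn1 nn2 L1 by blast
  have pg: "\<And>x. x \<in> space M \<Longrightarrow> p1 x * g x = sqrt (p1 x * p2 x)"
    unfolding g_def lratio_def using nn1 nn2 L3 by blast
  have pf2: "AE x in M. p2 x * (f x)\<^sup>2 = p1 x"
    using ae AE_space by eventually_elim (auto simp: f_def lratio_def L2 nn1 nn2)
  have pg2: "AE x in M. p1 x * (g x)\<^sup>2 = p2 x"
    using ae AE_space
  proof eventually_elim
    case (elim x)
    have "p1 x * (g x)\<^sup>2 = (if p1 x = 0 \<or> p2 x = 0 then 0 else p2 x)"
      unfolding g_def lratio_def by (rule L4[OF nn1[OF elim(2)] nn2[OF elim(2)]])
    then show ?case using elim(1) by auto
  qed
  have if2: "integrable M (\<lambda>x. p2 x * (f x)\<^sup>2)"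
    using integrable_cong_AE[OF _ _ pf2] i1 by simp
  have ig2: "integrable M (\<lambda>x. p1 x * (g x)\<^sup>2)"
    using integrable_cong_AE[OF _ _ pg2] i2 by simp
  have ef2: "(\<integral>x. p2 x * (f x)\<^sup>2 \<partial>M) = 1" using integral_cong_AE[OF _ _ pf2] i1 by simp
  have eg2: "(\<integral>x. p1 x * (g x)\<^sup>2 \<partial>M) = 1" using integral_cong_AE[OF _ _ pg2] i2 by simp
  have ef: "(\<integral>x. p2 x * f x \<partial>M) = (\<integral>x. sqrt (p1 x * p2 x) \<partial>M)" using pf by (intro Bochner_Integration.integral_cong) auto
  have eg: "(\<integral>x. p1 x * g x \<partial>M) = (\<integral>x. sqrt (p1 x * p2 x) \<partial>M)" using pg by (intro Bochner_Integration.integral_cong) auto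
  have F2: "integrable ?P2 (\<lambda>x. (f x)\<^sup>2)" using if2 by (subst integrable_density) (auto simp: aeM2)
  have G2: "integrable ?P1 (\<lambda>x. (g x)\<^sup>2)" using ig2 by (subst integrable_density) (auto simp: aeM1)
  have EF2: "(\<integral>x. (f x)\<^sup>2 \<partial>?P2) = 1" using ef2 by (subst integral_density) (auto simp: aeM2)
  have EG2: "(\<integral>x. (g x)\<^sup>2 \<partial>?P1) = 1" using eg2 by (subst integral_density) (auto simp: aeM1)
  have EF: "(\<integral>x. f x \<partial>?P2) = (\<integral>x. sqrt (p1 x * p2 x) \<partial>M)" using ef by (subst integral_density) (auto simp: aeM2)
  have EG: "(\<integral>x. g x \<partial>?P1) = (\<integral>x. sqrt (p1 x * p2 x) \<partial>M)" using eg by (subst integral_density) (auto simp: aeM1)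
  have "Delta_var M p1 p2 (1/2) = evar (?P1 \<Otimes>\<^sub>M ?P2) (\<lambda>(x1, x2). f x2 - g x1)"
    unfolding Delta_var_def f_def g_def ..
  also have "\<dots> = ennreal (((\<integral>x. (f x)\<^sup>2 \<partial>?P2) - (\<integral>x. f x \<partial>?P2)\<^sup>2) + ((\<integral>x. (g x)\<^sup>2 \<partial>?P1) - (\<integral>x. g x \<partial>?P1)\<^sup>2))"
    by (rule var_split[OF dens_prob[OF d1] dens_prob[OF d2] fm' gm' F2 G2])
  also have "\<dots> = ennreal (2 * (1 - (\<integral> x. sqrt (p1 x * p2 x) \<partial>M)\<^sup>2))"
    unfolding EF2 EG2 EF EG by simp
  finally show ?thesis .
qed



lemma SUP_top_ennreal:
  fixes F :: "'b \<Rightarrow> ennreal"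
  assumes "\<And>K. 0 \<le> K \<Longrightarrow> \<exists>i\<in>A. ennreal K \<le> F i"
  shows "(SUP i\<in>A. F i) = \<top>"
proof (rule ccontr)
  assume ne: "(SUP i\<in>A. F i) \<noteq> \<top>"
  then obtain r where r: "(SUP i\<in>A. F i) = ennreal r" "0 \<le> r" by (cases "(SUP i\<in>A. F i)") auto
  obtain i where i: "i \<in> A" "ennreal (r + 1) \<le> F i" using assms[of "r+1"] r by auto
  have "F i \<le> (SUP i\<in>A. F i)" using i by (intro SUP_upper) 
  have "ennreal (r + 1) \<le> (SUP i\<in>A. F i)" using i(2) \<open>F i \<le> _\<close> by (rule order_trans)
  then have "ennreal (r + 1) \<le> ennreal r" unfolding r(1) .
  then show False using ennreal_le_iff[OF r(2)] by auto
qed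

lemma two_pt_int:
  assumes "0 \<le> w" "w \<le> 1"
  shows "integrable (density (count_space {0::real,1}) (\<lambda>x. ennreal (if x = 0 then w else 1 - w))) h"
    and "(\<integral>x. h x \<partial>density (count_space {0::real,1}) (\<lambda>x. ennreal (if x = 0 then w else 1 - w))) = w * h 0 + (1-w) * h 1"
proof -
  have ae: "AE x in count_space {0::real,1}. 0 \<le> (if x = 0 then w else 1 - w)" using assms by (intro AE_I2) auto
  show "integrable (density (count_space {0::real,1}) (\<lambda>x. ennreal (if x = 0 then w else 1 - w))) h"
    using ae by (subst integrable_density) (auto intro: integrable_count_space)
  show "(\<integral>x. h x \<partial>density (count_space {0::real,1}) (\<lambda>x. ennreal (if x = 0 then w else 1 - w))) = w * h 0 + (1-w) * h 1"
    using ae by (subst integral_density) (auto simp: lebesgue_integral_count_space_finite)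
qed

lemma two_pt_mem:
  assumes "0 < a" "a < 1" "0 < b" "b < 1"
  shows "(count_space {0::real,1}, (\<lambda>x. if x = 0 then a else 1 - a), (\<lambda>x. if x = 0 then b else 1 - b))
     \<in> {(N :: real measure, q1, q2). sigma_finite_measure N \<and> (q1, q2) \<in> Pac N}"
proof -
  have sf: "sigma_finite_measure (count_space {0::real,1})"
    using finite_measure_count_space[of "{0::real,1}"] by (auto simp: finite_measure_def)
  have pd: "is_prob_density (count_space {0::real,1}) (\<lambda>x. if x = 0 then w else 1 - w)" if "0 < w" "w < 1" for w
    using that by (auto simp: is_prob_density_def nn_integral_count_space_finite ennreal_plus[symmetric])
  show ?thesis using sf pd[of a] pd[of b] assms by (auto simp: Pac_def)
qed

lemma two_pt_var:
  assumes "0 < a" "a < 1" "0 < b" "b < 1"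
  shows "Delta_var (count_space {0::real,1}) (\<lambda>x. if x = 0 then a else 1 - a) (\<lambda>x. if x = 0 then b else 1 - b) t
    = ennreal (b*(1-b)*((a/b) powr t - ((1-a)/(1-b)) powr t)\<^sup>2 + a*(1-a)*((a/b) powr (t-1) - ((1-a)/(1-b)) powr (t-1))\<^sup>2)"
proof -
  let ?q1 = "\<lambda>x::real. if x = 0 then a else 1 - a" and ?q2 = "\<lambda>x::real. if x = 0 then b else 1 - b"
  let ?N = "count_space {0::real,1}"
  define f where "f = (\<lambda>x. lratio ?q1 ?q2 x powr t)"
  define g where "g = (\<lambda>x. lratio ?q1 ?q2 x powr (t - 1))"
  have f0: "f 0 = (a/b) powr t" "f 1 = ((1-a)/(1-b)) powr t" by (simp_all add: f_def lratio_def)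
  have g0: "g 0 = (a/b) powr (t-1)" "g 1 = ((1-a)/(1-b)) powr (t-1)" by (simp_all add: g_def lratio_def)
  have P1: "prob_space (density ?N (\<lambda>x. ennreal (?q1 x)))"
    using two_pt_mem[OF assms] by (intro dens_prob) (auto simp: Pac_def)
  have P2: "prob_space (density ?N (\<lambda>x. ennreal (?q2 x)))"
    using two_pt_mem[OF assms] by (intro dens_prob) (auto simp: Pac_def)
  have a': "0 \<le> a" "a \<le> 1" "0 \<le> b" "b \<le> 1" using assms by auto
  have "Delta_var ?N ?q1 ?q2 t = evar (density ?N (\<lambda>x. ennreal (?q1 x)) \<Otimes>\<^sub>M density ?N (\<lambda>x. ennreal (?q2 x))) (\<lambda>(x1, x2). f x2 - g x1)"
    unfolding Delta_var_def f_def g_def ..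
  also have "\<dots> = ennreal (((\<integral>x. (f x)\<^sup>2 \<partial>density ?N (\<lambda>x. ennreal (?q2 x))) - (\<integral>x. f x \<partial>density ?N (\<lambda>x. ennreal (?q2 x)))\<^sup>2)
       + ((\<integral>x. (g x)\<^sup>2 \<partial>density ?N (\<lambda>x. ennreal (?q1 x))) - (\<integral>x. g x \<partial>density ?N (\<lambda>x. ennreal (?q1 x)))\<^sup>2))"
    by (rule var_split[OF P1 P2]) (auto intro: two_pt_int a')
  also have "\<dots> = ennreal (b*(1-b)*((a/b) powr t - ((1-a)/(1-b)) powr t)\<^sup>2 + a*(1-a)*((a/b) powr (t-1) - ((1-a)/(1-b)) powr (t-1))\<^sup>2)"
    unfolding two_pt_int(2)[OF a'(1,2)] two_pt_int(2)[OF a'(3,4)] f0 g0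
    by (simp add: power2_eq_square algebra_simps)
  finally show ?thesis .
qed



lemma Klem:
  fixes s u v :: real
  assumes "0 < s" "s \<le> 1" "1 \<le> u" "0 \<le> v" "v \<le> 1"
  shows "s * u\<^sup>2 / 8 - 1 \<le> (s/2) * (1 - s/2) * (u - v)\<^sup>2"
proof -
  have h1: "(u - 1)\<^sup>2 \<le> (u - v)\<^sup>2" using assms by (intro power_mono) auto
  have h2: "u\<^sup>2 / 2 - 1 \<le> (u - 1)\<^sup>2"
  proof -
    have "0 \<le> (u - 2)\<^sup>2" by simp
    then show ?thesis by (simp add: power2_eq_square algebra_simps)
  qed
  have ss: "s * s \<le> s" using assms mult_left_le[of s s] by simp
  have h3: "s / 4 \<le> (s/2) * (1 - s/2)" using ss by (simp add: algebra_simps)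
  have h12: "u\<^sup>2 / 2 - 1 \<le> (u - v)\<^sup>2" using h1 h2 by linarith
  have "s * u\<^sup>2 / 8 - 1 \<le> (s/4) * (u\<^sup>2 / 2 - 1)" using assms by (simp add: algebra_simps)
  also have "\<dots> \<le> (s/4) * (u - v)\<^sup>2" using h12 assms by (intro mult_left_mono) auto
  also have "\<dots> \<le> (s/2) * (1 - s/2) * (u - v)\<^sup>2" using h3 by (intro mult_right_mono) auto
  finally show ?thesis .
qed

lemma powr_le_one_neg: assumes "1 \<le> (x::real)" "a \<le> 0" shows "x powr a \<le> 1"
proof -
  have "1 \<le> x powr (-a)" using assms by (intro ge_one_powr_ge_zero) auto
  moreover have "x powr a = inverse (x powr (-a))" using assms by (simp add: powr_minus)
  ultimately show ?thesis by (simp add: inverse_le_1_iff)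
qed

lemma powr_ge_one_neg: assumes "0 < (x::real)" "x \<le> 1" "a \<le> 0" shows "1 \<le> x powr a"
proof -
  have "x powr (-a) \<le> 1" "0 < x powr (-a)" using assms by (auto intro: powr_le1)
  moreover have "x powr a = inverse (x powr (-a))" using assms by (simp add: powr_minus)
  ultimately show ?thesis by (simp add: one_le_inverse_iff)
qed

lemma choose_s:
  fixes e K :: real
  assumes "e < 0" "0 \<le> K"
  obtains s where "0 < s" "s \<le> 1" "s powr e = 8 * K + 8"
proof
  let ?s = "(8 * K + 8) powr (1/e)"
  show "0 < ?s" using assms by simp
  show "?s \<le> 1" using assms by (intro powr_le_one_neg) (auto simp: divide_nonpos_neg)
  show "?s powr e = 8 * K + 8" using assms by (simp add: powr_powr)
qed



lemma su1: assumes "0 < (s::real)" shows "s * ((1/s) powr t)\<^sup>2 = s powr (1 - 2*t)"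
proof -
  have "((1/s) powr t)\<^sup>2 = (1/s) powr (2*t)" using assms by (subst powr_power) auto
  also have "\<dots> = 1 / s powr (2*t)" using assms by (simp add: powr_divide)
  finally have "s * ((1/s) powr t)\<^sup>2 = s powr 1 / s powr (2*t)" using assms by simp
  also have "\<dots> = s powr (1 - 2*t)" by (rule powr_diff[symmetric])
  finally show ?thesis .
qed

lemma su2: assumes "0 < (s::real)" shows "s * (s powr (t - 1))\<^sup>2 = s powr (2*t - 1)"
proof -
  have "(s powr (t - 1))\<^sup>2 = s powr (2*(t - 1))" using assms by (subst powr_power) auto
  then have "s * (s powr (t - 1))\<^sup>2 = s powr 1 * s powr (2*(t-1))" using assms by simp
  also have "\<dots> = s powr (1 + 2*(t-1))" by (rule powr_add[symmetric])
  also have "1 + 2*(t-1) = 2*t - 1" by simp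
  finally show ?thesis .
qed

lemma part2:
  assumes "t \<noteq> 1/2"
  shows "(SUP (N, q1, q2) \<in> {(N :: real measure, q1, q2). sigma_finite_measure N \<and> (q1, q2) \<in> Pac N}.
                 Delta_var N q1 q2 t) = \<infinity>"
proof -
  let ?S = "{(N :: real measure, q1, q2). sigma_finite_measure N \<and> (q1, q2) \<in> Pac N}"
  have "\<exists>i\<in>?S. ennreal K \<le> (case i of (N, q1, q2) \<Rightarrow> Delta_var N q1 q2 t)" if K: "0 \<le> K" for K
  proof (cases "t > 1/2")
    case True
    obtain s where s: "0 < s" "s \<le> 1" "s powr (1 - 2*t) = 8 * K + 8"
      using choose_s[of "1 - 2*t" K] True K by auto
    define u where "u = (1/s) powr t"
    define v where "v = (1/(2-s)) powr t"
    have ab: "(1/2) / (s/2) = 1/s" "(1 - 1/2) / (1 - s/2) = 1/(2-s)" using s by (auto simp: field_simps)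
    have u1: "1 \<le> u" unfolding u_def using s True by (intro ge_one_powr_ge_zero) auto
    have v1: "0 \<le> v" "v \<le> 1" unfolding v_def using s True by (auto intro!: powr_le1)
    have su: "s * u\<^sup>2 = 8 * K + 8" unfolding u_def using su1[OF s(1), of t] s(3) by simp
    have kl: "s * u\<^sup>2 / 8 - 1 \<le> (s/2) * (1 - s/2) * (u - v)\<^sup>2" by (rule Klem[OF s(1,2) u1 v1])
    have lb: "K \<le> (s/2) * (1 - s/2) * (u - v)\<^sup>2" using kl unfolding su by (simp add: field_simps)
    have mem: "(count_space {0::real,1}, (\<lambda>x. if x = 0 then 1/2 else 1 - 1/2), (\<lambda>x. if x = 0 then s/2 else 1 - s/2)) \<in> ?S"
      using s by (intro two_pt_mem) auto
    have val: "Delta_var (count_space {0::real,1}) (\<lambda>x. if x = 0 then 1/2 else 1 - 1/2) (\<lambda>x. if x = 0 then s/2 else 1 - s/2) t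
       = ennreal ((s/2) * (1 - s/2) * (u - v)\<^sup>2 + (1/2) * (1 - 1/2) * (((1/2)/(s/2)) powr (t-1) - ((1-1/2)/(1-s/2)) powr (t-1))\<^sup>2)"
      using two_pt_var[of "1/2" "s/2" t] s unfolding u_def v_def ab by simp
    have "ennreal K \<le> Delta_var (count_space {0::real,1}) (\<lambda>x. if x = 0 then 1/2 else 1 - 1/2) (\<lambda>x. if x = 0 then s/2 else 1 - s/2) t"
      unfolding val using lb by (intro ennreal_leI) (simp add: add_increasing2)
    then show ?thesis using mem by force
  next
    case False
    then have tl: "t < 1/2" using assms by auto
    obtain s where s: "0 < s" "s \<le> 1" "s powr (2*t - 1) = 8 * K + 8"
      using choose_s[of "2*t - 1" K] tl K by auto
    define u where "u = s powr (t - 1)"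
    define v where "v = (2-s) powr (t - 1)"
    have ab: "(s/2) / (1/2) = s" "(1 - s/2) / (1 - 1/2) = 2-s" using s by (auto simp: field_simps)
    have u1: "1 \<le> u" unfolding u_def using s tl by (intro powr_ge_one_neg) auto
    have v1: "0 \<le> v" "v \<le> 1" unfolding v_def using s tl by (auto intro!: powr_le_one_neg)
    have su: "s * u\<^sup>2 = 8 * K + 8" unfolding u_def using su2[OF s(1), of t] s(3) by simp
    have kl: "s * u\<^sup>2 / 8 - 1 \<le> (s/2) * (1 - s/2) * (u - v)\<^sup>2" by (rule Klem[OF s(1,2) u1 v1])
    have lb: "K \<le> (s/2) * (1 - s/2) * (u - v)\<^sup>2" using kl unfolding su by (simp add: field_simps)
    have mem: "(count_space {0::real,1}, (\<lambda>x. if x = 0 then s/2 else 1 - s/2), (\<lambda>x. if x = 0 then 1/2 else 1 - 1/2)) \<in> ?S"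
      using s by (intro two_pt_mem) auto
    have val: "Delta_var (count_space {0::real,1}) (\<lambda>x. if x = 0 then s/2 else 1 - s/2) (\<lambda>x. if x = 0 then 1/2 else 1 - 1/2) t
       = ennreal ((1/2) * (1 - 1/2) * (((s/2)/(1/2)) powr t - ((1-s/2)/(1-1/2)) powr t)\<^sup>2 + (s/2) * (1 - s/2) * (u - v)\<^sup>2)"
      using two_pt_var[of "s/2" "1/2" t] s unfolding u_def v_def ab by simp
    have "ennreal K \<le> Delta_var (count_space {0::real,1}) (\<lambda>x. if x = 0 then s/2 else 1 - s/2) (\<lambda>x. if x = 0 then 1/2 else 1 - 1/2) t"
      unfolding val using lb by (intro ennreal_leI) (simp add: add_increasing)
    then show ?thesis using mem by force
  qed
  then have "(SUP i\<in>?S. (case i of (N, q1, q2) \<Rightarrow> Delta_var N q1 q2 t)) = \<top>"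
    by (rule SUP_top_ennreal)
  then show ?thesis by (simp add: infinity_ennreal_def)
qed


theorem lemma4:
  fixes M :: "'a measure" and p1 p2 :: "'a \<Rightarrow> real"
  assumes "sigma_finite_measure M"
    and "(p1, p2) \<in> Pac M"
  shows "(Delta_var M p1 p2 (1/2) = ennreal (2 * (1 - (\<integral> x. sqrt (p1 x * p2 x) \<partial>M)\<^sup>2))
           \<and> Delta_var M p1 p2 (1/2) < \<infinity>)
         \<and> (\<forall>t::real. t \<noteq> 1/2 \<longrightarrow>
              (SUP (N, q1, q2) \<in> {(N :: real measure, q1, q2). sigma_finite_measure N \<and> (q1, q2) \<in> Pac N}.
                 Delta_var N q1 q2 t) = \<infinity>)"
  using part1[OF assms(2)] part2 by simp

end
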